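(* If $(A,\pi_A)$, $(B,\pi_B)$, $(C,\pi_C)$ are signed graphs such that $(A,\pi_A)\,\square\,(B,\pi_B)\equiv(A,\pi_A)\,\square\,(C,\pi_C)$, then $(B,\pi_B)\equiv(C,\pi_C)$.
   Context: A signed graph $(G,\sigma)$ is a simple loopless undirected graph with a signature $\sigma:E(G)\to\{+1,-1\}$. Switching a vertex negates the signs of its incident edges. Two signed graphs are equivalent ($\equiv$) if there is a graph isomorphism between them carrying one signature to a signature obtained from the other by switching a set of vertices. The Cartesian product $(G,\sigma)\,\square\,(H,\pi)$ is the signed graph on $G\,\square\,H$ where $(u,v_1)(u,v_2)$ has sign $\pi(v_1v_2)$ and $(u_1,v)(u_2,v)$ has sign $\sigma(u_1u_2)$. *)

theory Defs
  imports Main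
begin

definition signed_graph :: "'a set \<Rightarrow> 'a set set \<Rightarrow> ('a set \<Rightarrow> int) \<Rightarrow> bool" where
  "signed_graph V E \<sigma> \<longleftrightarrow>
     (\<forall>e\<in>E. \<exists>u v. u \<in> V \<and> v \<in> V \<and> u \<noteq> v \<and> e = {u, v}) \<and>
     (\<forall>e\<in>E. \<sigma> e = 1 \<or> \<sigma> e = -1)"

definition switch :: "('a set \<Rightarrow> int) \<Rightarrow> 'a set \<Rightarrow> 'a set \<Rightarrow> int" where
  "switch \<sigma> S e = (if card (e \<inter> S) = 1 then - \<sigma> e else \<sigma> e)"

definition sg_equiv ::
  "'a set \<Rightarrow> 'a set set \<Rightarrow> ('a set \<Rightarrow> int) \<Rightarrow>
   'b set \<Rightarrow> 'b set set \<Rightarrow> ('b set \<Rightarrow> int) \<Rightarrow> bool" where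
  "sg_equiv V E \<sigma> V' E' \<sigma>' \<longleftrightarrow>
     (\<exists>f S. bij_betw f V V' \<and>
        (\<forall>u\<in>V. \<forall>v\<in>V. {u, v} \<in> E \<longleftrightarrow> {f u, f v} \<in> E') \<and>
        S \<subseteq> V \<and>
        (\<forall>e\<in>E. \<sigma>' (f ` e) = switch \<sigma> S e))"

definition cprod_V :: "'a set \<Rightarrow> 'b set \<Rightarrow> ('a \<times> 'b) set" where
  "cprod_V VG VH = VG \<times> VH"

definition cprod_E ::
  "'a set \<Rightarrow> 'a set set \<Rightarrow> 'b set \<Rightarrow> 'b set set \<Rightarrow> ('a \<times> 'b) set set" where
  "cprod_E VG EG VH EH =
     {{(u, v1), (u, v2)} | u v1 v2. u \<in> VG \<and> {v1, v2} \<in> EH} \<union>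
     {{(u1, v), (u2, v)} | u1 u2 v. v \<in> VH \<and> {u1, u2} \<in> EG}"

text \<open>Sign of a product edge: if both endpoints share the first coordinate
(edge (u,v1)(u,v2)) it is the H-sign of v1v2, otherwise (edge (u1,v)(u2,v))
it is the G-sign of u1u2.\<close>

definition cprod_sig ::
  "('a set \<Rightarrow> int) \<Rightarrow> ('b set \<Rightarrow> int) \<Rightarrow> ('a \<times> 'b) set \<Rightarrow> int" where
  "cprod_sig \<sigma> \<pi> e = (if card (fst ` e) = 1 then \<pi> (snd ` e) else \<sigma> (fst ` e))"

end

theory Submission
  imports Defs "HOL-Library.FuncSet"
begin

definition okm :: "'v set set \<Rightarrow> ('v set \<Rightarrow> int) \<Rightarrow> nat set \<Rightarrow> (nat \<Rightarrow> nat) \<Rightarrow> (nat \<Rightarrow> nat)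
   \<Rightarrow> (nat \<times> nat) set \<Rightarrow> (nat \<times> nat) set \<Rightarrow> nat set \<Rightarrow> nat set \<Rightarrow> (nat \<Rightarrow> 'v) \<Rightarrow> (nat \<Rightarrow> bool) \<Rightarrow> bool" where
"okm E \<sigma> I ea eb Q D M N \<phi> x \<longleftrightarrow>
  (\<forall>e\<in>I. if e \<in> M then {\<phi> (ea e), \<phi> (eb e)} \<in> E \<and> ((\<sigma> {\<phi> (ea e), \<phi> (eb e)} = -1) = ((e \<in> N) \<noteq> (x (ea e) \<noteq> x (eb e))))
         else \<phi> (ea e) = \<phi> (eb e) \<and> ((e \<in> N) = (x (ea e) \<noteq> x (eb e)))) \<and>
  (\<forall>p\<in>Q. \<phi> (fst p) = \<phi> (snd p)) \<and> (\<forall>p\<in>D. \<phi> (fst p) \<noteq> \<phi> (snd p))"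

definition cnt :: "'v set \<Rightarrow> 'v set set \<Rightarrow> ('v set \<Rightarrow> int) \<Rightarrow> nat \<Rightarrow> nat set \<Rightarrow> (nat \<Rightarrow> nat) \<Rightarrow> (nat \<Rightarrow> nat)
   \<Rightarrow> (nat \<times> nat) set \<Rightarrow> (nat \<times> nat) set \<Rightarrow> nat set \<Rightarrow> nat set \<Rightarrow> nat" where
"cnt V E \<sigma> n I ea eb Q D M N = (\<Sum>\<phi>\<in>{..<n} \<rightarrow>\<^sub>E V. \<Sum>x\<in>{..<n} \<rightarrow>\<^sub>E (UNIV::bool set).
    if okm E \<sigma> I ea eb Q D M N \<phi> x then 1 else 0)"

definition wfe :: "nat \<Rightarrow> nat set \<Rightarrow> (nat \<Rightarrow> nat) \<Rightarrow> (nat \<Rightarrow> nat) \<Rightarrow> bool" where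
"wfe n I ea eb \<longleftrightarrow> (\<forall>e\<in>I. ea e < n \<and> eb e < n)"

definition wfp :: "nat \<Rightarrow> (nat \<times> nat) set \<Rightarrow> bool" where
"wfp n Q \<longleftrightarrow> (\<forall>p\<in>Q. fst p < n \<and> snd p < n)"

lemma sg_edge_neq: "signed_graph V E \<sigma> \<Longrightarrow> {p, q} \<in> E \<Longrightarrow> p \<noteq> q \<and> p \<in> V \<and> q \<in> V"
  unfolding signed_graph_def by (metis doubleton_eq_iff)

lemma sg_sign: "signed_graph V E \<sigma> \<Longrightarrow> e \<in> E \<Longrightarrow> \<sigma> e = 1 \<or> \<sigma> e = -1"
  unfolding signed_graph_def by blast

lemma switch_pair: "p \<noteq> q \<Longrightarrow> switch \<sigma> S {p, q} = (if (p \<in> S) \<noteq> (q \<in> S) then - \<sigma> {p,q} else \<sigma> {p,q})"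
  unfolding switch_def by (cases "p \<in> S"; cases "q \<in> S") (auto simp: Int_insert_left)

lemma ball_cong2: "(\<And>x. x \<in> A \<Longrightarrow> P x = Q x) \<Longrightarrow> (\<forall>x\<in>A. P x) = (\<forall>x\<in>A. Q x)"
  by auto

lemma finX: "finite ({..<(n::nat)} \<rightarrow>\<^sub>E (UNIV::bool set))"
  by (rule finite_PiE) auto

lemma cnt_alt: "cnt V E \<sigma> n I ea eb Q D M N =
   (\<Sum>p\<in>({..<n} \<rightarrow>\<^sub>E V) \<times> ({..<n} \<rightarrow>\<^sub>E (UNIV::bool set)). if okm E \<sigma> I ea eb Q D M N (fst p) (snd p) then 1 else 0)"
  unfolding cnt_def sum.cartesian_product by (simp add: case_prod_beta)

lemma cnt_equiv:
  assumes sg: "signed_graph V E \<sigma>" "signed_graph V' E' \<sigma>'"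
  and eq: "sg_equiv V E \<sigma> V' E' \<sigma>'" and w: "wfe n I ea eb" "wfp n Q" "wfp n D"
  shows "cnt V E \<sigma> n I ea eb Q D M N = cnt V' E' \<sigma>' n I ea eb Q D M N"
proof -
  obtain f S where f: "bij_betw f V V'" and iso: "\<forall>u\<in>V. \<forall>v\<in>V. {u,v}\<in>E \<longleftrightarrow> {f u, f v}\<in>E'"
    and sig: "\<forall>e\<in>E. \<sigma>' (f ` e) = switch \<sigma> S e"
    using eq unfolding sg_equiv_def by blast
  define g where "g = inv_into V f"
  have fin: "inj_on f V" using f by (simp add: bij_betw_def)
  have gf: "\<And>v. v \<in> V \<Longrightarrow> g (f v) = v" unfolding g_def using fin by simp
  have fg: "\<And>v. v \<in> V' \<Longrightarrow> f (g v) = v" unfolding g_def using f by (simp add: bij_betw_inv_into_right)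
  have gV: "\<And>v. v \<in> V' \<Longrightarrow> g v \<in> V" unfolding g_def using f by (metis bij_betw_def inv_into_into)
  have fV: "\<And>v. v \<in> V \<Longrightarrow> f v \<in> V'" using f by (meson bij_betwE)
  define X where "X = {..<n} \<rightarrow>\<^sub>E (UNIV::bool set)"
  define h where "h = (\<lambda>p::(nat\<Rightarrow>'a)\<times>(nat\<Rightarrow>bool). (restrict (f \<circ> fst p) {..<n}, restrict (\<lambda>a. snd p a \<noteq> (fst p a \<in> S)) {..<n}))"
  define h' where "h' = (\<lambda>p::(nat\<Rightarrow>'b)\<times>(nat\<Rightarrow>bool). (restrict (g \<circ> fst p) {..<n}, restrict (\<lambda>a. snd p a \<noteq> (g (fst p a) \<in> S)) {..<n}))"
  have bij: "bij_betw h (({..<n} \<rightarrow>\<^sub>E V) \<times> X) (({..<n} \<rightarrow>\<^sub>E V') \<times> X)"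
  proof (rule bij_betwI[where g = h'])
    show "h \<in> ({..<n} \<rightarrow>\<^sub>E V) \<times> X \<rightarrow> ({..<n} \<rightarrow>\<^sub>E V') \<times> X"
      unfolding h_def X_def using fV by (auto simp: PiE_iff)
    show "h' \<in> ({..<n} \<rightarrow>\<^sub>E V') \<times> X \<rightarrow> ({..<n} \<rightarrow>\<^sub>E V) \<times> X"
      unfolding h'_def X_def using gV by (auto simp: PiE_iff)
    show "h' (h p) = p" if "p \<in> ({..<n} \<rightarrow>\<^sub>E V) \<times> X" for p
    proof -
      obtain \<phi> x where p: "p = (\<phi>, x)" by fastforce
      have "\<phi> \<in> {..<n} \<rightarrow>\<^sub>E V" "x \<in> X" using that p by auto
      then show ?thesis unfolding p h_def h'_def X_def
        by (auto simp: PiE_iff gf fun_eq_iff extensional_def)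
    qed
    show "h (h' p) = p" if "p \<in> ({..<n} \<rightarrow>\<^sub>E V') \<times> X" for p
    proof -
      obtain \<phi> x where p: "p = (\<phi>, x)" by fastforce
      have "\<phi> \<in> {..<n} \<rightarrow>\<^sub>E V'" "x \<in> X" using that p by auto
      then show ?thesis unfolding p h_def h'_def X_def
        by (auto simp: PiE_iff fg gV fun_eq_iff extensional_def)
    qed
  qed
  have okeq: "okm E' \<sigma>' I ea eb Q D M N (fst (h p)) (snd (h p)) = okm E \<sigma> I ea eb Q D M N (fst p) (snd p)"
    if "p \<in> ({..<n} \<rightarrow>\<^sub>E V) \<times> X" for p
  proof -
    obtain \<phi> x where p: "p = (\<phi>, x)" by fastforce
    have \<phi>: "\<And>a. a < n \<Longrightarrow> \<phi> a \<in> V" using that p by auto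
    have edge: "(if e \<in> M then {f (\<phi> a), f (\<phi> b)} \<in> E' \<and> ((\<sigma>' {f (\<phi> a), f (\<phi> b)} = -1) =
            ((e \<in> N) \<noteq> ((x a \<noteq> (\<phi> a \<in> S)) \<noteq> (x b \<noteq> (\<phi> b \<in> S)))))
         else f (\<phi> a) = f (\<phi> b) \<and> ((e \<in> N) = ((x a \<noteq> (\<phi> a \<in> S)) \<noteq> (x b \<noteq> (\<phi> b \<in> S)))))
      = (if e \<in> M then {\<phi> a, \<phi> b} \<in> E \<and> ((\<sigma> {\<phi> a, \<phi> b} = -1) = ((e \<in> N) \<noteq> (x a \<noteq> x b)))
         else \<phi> a = \<phi> b \<and> ((e \<in> N) = (x a \<noteq> x b)))" if ab: "a < n" "b < n" for e a b
    proof (cases "e \<in> M")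
      case True
      have A: "{\<phi> a, \<phi> b} \<in> E \<longleftrightarrow> {f (\<phi> a), f (\<phi> b)} \<in> E'" using iso \<phi> ab by blast
      show ?thesis
      proof (cases "{\<phi> a, \<phi> b} \<in> E")
        case e: True
        have ne: "\<phi> a \<noteq> \<phi> b" using sg_edge_neq[OF sg(1) e] by blast
        have s: "\<sigma>' {f (\<phi> a), f (\<phi> b)} = switch \<sigma> S {\<phi> a, \<phi> b}" using sig e by auto
        have "\<sigma> {\<phi> a, \<phi> b} = 1 \<or> \<sigma> {\<phi> a, \<phi> b} = -1" using sg_sign[OF sg(1) e] .
        then show ?thesis using True e A s switch_pair[OF ne, of \<sigma> S] by auto
      next
        case False
        then show ?thesis using True A by auto
      qed
    next
      case False
      have "f (\<phi> a) = f (\<phi> b) \<longleftrightarrow> \<phi> a = \<phi> b" using \<phi> ab by (simp add: inj_on_eq_iff[OF fin])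
      then show ?thesis using False by auto
    qed
    have inj2: "\<And>a b. a < n \<Longrightarrow> b < n \<Longrightarrow> f (\<phi> a) = f (\<phi> b) \<longleftrightarrow> \<phi> a = \<phi> b"
      using \<phi> by (simp add: inj_on_eq_iff[OF fin])
    define \<psi> where "\<psi> = restrict (f \<circ> \<phi>) {..<n}"
    define y where "y = restrict (\<lambda>a. x a \<noteq> (\<phi> a \<in> S)) {..<n}"
    have hp: "h (\<phi>, x) = (\<psi>, y)" unfolding h_def \<psi>_def y_def by simp
    have \<psi>a: "\<And>a. a < n \<Longrightarrow> \<psi> a = f (\<phi> a)" unfolding \<psi>_def by simp
    have ya: "\<And>a. a < n \<Longrightarrow> y a = (x a \<noteq> (\<phi> a \<in> S))" unfolding y_def by simp
    have wI: "\<And>e. e \<in> I \<Longrightarrow> ea e < n \<and> eb e < n" using w(1) unfolding wfe_def by blast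
    have wQ: "\<And>p. p \<in> Q \<Longrightarrow> fst p < n \<and> snd p < n" using w(2) unfolding wfp_def by blast
    have wD: "\<And>p. p \<in> D \<Longrightarrow> fst p < n \<and> snd p < n" using w(3) unfolding wfp_def by blast
    show ?thesis
      unfolding p hp fst_conv snd_conv okm_def
    proof (intro conj_cong ball_cong2 refl)
      fix e assume "e \<in> I"
      then show "(if e \<in> M then {\<psi> (ea e), \<psi> (eb e)} \<in> E' \<and> (\<sigma>' {\<psi> (ea e), \<psi> (eb e)} = - 1) = ((e \<in> N) \<noteq> (y (ea e) \<noteq> y (eb e)))
          else \<psi> (ea e) = \<psi> (eb e) \<and> (e \<in> N) = (y (ea e) \<noteq> y (eb e))) =
         (if e \<in> M then {\<phi> (ea e), \<phi> (eb e)} \<in> E \<and> (\<sigma> {\<phi> (ea e), \<phi> (eb e)} = - 1) = ((e \<in> N) \<noteq> (x (ea e) \<noteq> x (eb e)))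
          else \<phi> (ea e) = \<phi> (eb e) \<and> (e \<in> N) = (x (ea e) \<noteq> x (eb e)))"
        using edge[of "ea e" "eb e" e] wI[of e] by (simp only: \<psi>a ya)
    next
      fix q assume "q \<in> Q"
      then show "(\<psi> (fst q) = \<psi> (snd q)) = (\<phi> (fst q) = \<phi> (snd q))"
        using wQ[of q] inj2 by (simp only: \<psi>a)
    next
      fix q assume "q \<in> D"
      then show "(\<psi> (fst q) \<noteq> \<psi> (snd q)) = (\<phi> (fst q) \<noteq> \<phi> (snd q))"
        using wD[of q] inj2 by (simp only: \<psi>a)
    qed
  qed
  show ?thesis
    unfolding cnt_alt X_def[symmetric]
    apply (subst sum.reindex_bij_betw[OF bij, symmetric])
    apply (rule sum.cong[OF refl])
    using okeq by simp
qed

lemma cnt_Dsplit: "cnt V E \<sigma> n I ea eb Q D M N = cnt V E \<sigma> n I ea eb Q (insert p D) M N + cnt V E \<sigma> n I ea eb (insert p Q) D M N"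
proof -
  have "(if okm E \<sigma> I ea eb Q D M N \<phi> x then 1 else 0) = (if okm E \<sigma> I ea eb Q (insert p D) M N \<phi> x then 1 else 0)
     + (if okm E \<sigma> I ea eb (insert p Q) D M N \<phi> x then (1::nat) else 0)" for \<phi> x
  proof -
    obtain A where A: "A = (\<forall>e\<in>I. if e \<in> M then {\<phi> (ea e), \<phi> (eb e)} \<in> E \<and> ((\<sigma> {\<phi> (ea e), \<phi> (eb e)} = -1) = ((e \<in> N) \<noteq> (x (ea e) \<noteq> x (eb e))))
         else \<phi> (ea e) = \<phi> (eb e) \<and> ((e \<in> N) = (x (ea e) \<noteq> x (eb e))))" by blast
    have o: "okm E \<sigma> I ea eb Q' D' M N \<phi> x = (A \<and> (\<forall>p\<in>Q'. \<phi> (fst p) = \<phi> (snd p)) \<and> (\<forall>p\<in>D'. \<phi> (fst p) \<noteq> \<phi> (snd p)))" for Q' D'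
      unfolding okm_def A by (rule refl)
    show ?thesis unfolding o by (cases "\<phi> (fst p) = \<phi> (snd p)") auto
  qed
  then show ?thesis unfolding cnt_def sum.distrib[symmetric] by presburger
qed

lemma cnt_pos:
  assumes "v0 \<in> V" "finite V" "wfe n I ea eb" "wfp n Q"
  shows "cnt V E \<sigma> n I ea eb Q {} {} N \<noteq> 0 \<or> (\<exists>e\<in>I. e \<in> N)"
proof -
  define \<phi>0 where "\<phi>0 = restrict (\<lambda>_. v0) {..<n}"
  define x0 :: "nat \<Rightarrow> bool" where "x0 = restrict (\<lambda>_. False) {..<n}"
  have in1: "\<phi>0 \<in> {..<n} \<rightarrow>\<^sub>E V" unfolding \<phi>0_def using assms by auto
  have in2: "x0 \<in> {..<n} \<rightarrow>\<^sub>E UNIV" unfolding x0_def by auto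
  have fin1: "finite ({..<n} \<rightarrow>\<^sub>E V)" using assms(2) by (intro finite_PiE) auto
  { assume nN: "\<forall>e\<in>I. e \<notin> N"
    have ok: "okm E \<sigma> I ea eb Q {} {} N \<phi>0 x0"
      using assms(3,4) nN unfolding okm_def wfe_def wfp_def \<phi>0_def x0_def by auto
    have "(1::nat) \<le> (\<Sum>x\<in>{..<n} \<rightarrow>\<^sub>E UNIV. if okm E \<sigma> I ea eb Q {} {} N \<phi>0 x then 1 else 0)"
      using member_le_sum[OF in2, of "\<lambda>x. if okm E \<sigma> I ea eb Q {} {} N \<phi>0 x then (1::nat) else 0"] ok finX by simp
    also have "\<dots> \<le> cnt V E \<sigma> n I ea eb Q {} {} N"
      unfolding cnt_def using member_le_sum[OF in1, of "\<lambda>\<phi>. \<Sum>x\<in>{..<n} \<rightarrow>\<^sub>E UNIV. if okm E \<sigma> I ea eb Q {} {} N \<phi> x then (1::nat) else 0"] fin1 by simp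
    finally have "cnt V E \<sigma> n I ea eb Q {} {} N \<noteq> 0" by simp }
  then show ?thesis by blast
qed

lemma cnt_shift:
  assumes w: "wfe n I ea eb" and x0: "x0 \<in> {..<n} \<rightarrow>\<^sub>E (UNIV :: bool set)"
    and N1: "\<forall>e\<in>I. (e\<in>N1) = (x0 (ea e) \<noteq> x0 (eb e))"
  shows "cnt V E \<sigma> n I ea eb Q D M {e. (e\<in>N) \<noteq> (e\<in>N1)} = cnt V E \<sigma> n I ea eb Q D M N"
proof -
  define X where "X = {..<n} \<rightarrow>\<^sub>E (UNIV :: bool set)"
  define k where "k = (\<lambda>x::nat\<Rightarrow>bool. restrict (\<lambda>a. x a \<noteq> x0 a) {..<n})"
  have bk: "bij_betw k X X"
    by (rule bij_betwI[where g = k]) (auto simp: X_def k_def PiE_iff fun_eq_iff extensional_def)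
  have wI: "\<And>e. e \<in> I \<Longrightarrow> ea e < n \<and> eb e < n" using w unfolding wfe_def by blast
  have ok: "okm E \<sigma> I ea eb Q D M {e. (e\<in>N) \<noteq> (e\<in>N1)} \<phi> x = okm E \<sigma> I ea eb Q D M N \<phi> (k x)" for \<phi> x
    unfolding okm_def
  proof (intro conj_cong ball_cong2 refl)
    fix e assume e: "e \<in> I"
    have "k x (ea e) = (x (ea e) \<noteq> x0 (ea e))" "k x (eb e) = (x (eb e) \<noteq> x0 (eb e))"
      using wI[OF e] unfolding k_def by auto
    then show "(if e \<in> M then {\<phi> (ea e), \<phi> (eb e)} \<in> E \<and> (\<sigma> {\<phi> (ea e), \<phi> (eb e)} = - 1) = ((e \<in> {e. (e \<in> N) \<noteq> (e \<in> N1)}) \<noteq> (x (ea e) \<noteq> x (eb e)))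
          else \<phi> (ea e) = \<phi> (eb e) \<and> (e \<in> {e. (e \<in> N) \<noteq> (e \<in> N1)}) = (x (ea e) \<noteq> x (eb e))) =
         (if e \<in> M then {\<phi> (ea e), \<phi> (eb e)} \<in> E \<and> (\<sigma> {\<phi> (ea e), \<phi> (eb e)} = - 1) = ((e \<in> N) \<noteq> (k x (ea e) \<noteq> k x (eb e)))
          else \<phi> (ea e) = \<phi> (eb e) \<and> (e \<in> N) = (k x (ea e) \<noteq> k x (eb e)))"
      using N1 e by auto
  qed
  show ?thesis
    unfolding cnt_def X_def[symmetric] ok
    by (rule sum.cong[OF refl], rule sum.reindex_bij_betw[OF bk])
qed

lemma cprod_edge:
  assumes sgA: "signed_graph VA EA \<sigma>A" and sgB: "signed_graph VB EB \<sigma>B"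
    and "p1 \<in> VA" "q1 \<in> VA" "p2 \<in> VB" "q2 \<in> VB"
  shows "{(p1,p2),(q1,q2)} \<in> cprod_E VA EA VB EB \<longleftrightarrow> (p1 = q1 \<and> {p2,q2} \<in> EB) \<or> (p2 = q2 \<and> {p1,q1} \<in> EA)"
proof
  assume "{(p1,p2),(q1,q2)} \<in> cprod_E VA EA VB EB"
  then consider (a) u v1 v2 where "{(p1,p2),(q1,q2)} = {(u,v1),(u,v2)}" "{v1,v2} \<in> EB"
    | (b) u1 u2 v where "{(p1,p2),(q1,q2)} = {(u1,v),(u2,v)}" "{u1,u2} \<in> EA"
    unfolding cprod_E_def by blast
  then show "(p1 = q1 \<and> {p2,q2} \<in> EB) \<or> (p2 = q2 \<and> {p1,q1} \<in> EA)"
  proof cases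
    case a then show ?thesis unfolding doubleton_eq_iff by (auto simp: insert_commute)
  next
    case b then show ?thesis unfolding doubleton_eq_iff by (auto simp: insert_commute)
  qed
next
  assume "(p1 = q1 \<and> {p2,q2} \<in> EB) \<or> (p2 = q2 \<and> {p1,q1} \<in> EA)"
  then show "{(p1,p2),(q1,q2)} \<in> cprod_E VA EA VB EB"
    unfolding cprod_E_def using assms by blast
qed

lemma cprod_sig1: "cprod_sig \<sigma>A \<sigma>B {(p,p2),(p,q2)} = \<sigma>B {p2,q2}"
  unfolding cprod_sig_def by simp

lemma cprod_sig2: "p1 \<noteq> q1 \<Longrightarrow> cprod_sig \<sigma>A \<sigma>B {(p1,p2),(q1,p2)} = \<sigma>A {p1,q1}"
  unfolding cprod_sig_def by simp

lemma edge_split: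
  fixes ya yb za zb nE :: bool
  assumes sgA: "signed_graph VA EA \<sigma>A" and sgB: "signed_graph VB EB \<sigma>B"
    and V: "p1 \<in> VA" "q1 \<in> VA" "p2 \<in> VB" "q2 \<in> VB"
    and m: "m = (em \<and> p1 \<noteq> q1)"
    and n1: "n1 = (if m then (\<sigma>A {p1,q1} = -1) \<noteq> (ya \<noteq> yb) else (ya \<noteq> yb))"
  shows "(if em then {(p1,p2),(q1,q2)} \<in> cprod_E VA EA VB EB \<and>
            ((cprod_sig \<sigma>A \<sigma>B {(p1,p2),(q1,q2)} = -1) = (nE \<noteq> ((ya \<noteq> za) \<noteq> (yb \<noteq> zb))))
          else (p1, p2) = (q1, q2) \<and> nE = ((ya \<noteq> za) \<noteq> (yb \<noteq> zb)))
   = ((if m then {p1,q1} \<in> EA \<and> ((\<sigma>A {p1,q1} = -1) = (n1 \<noteq> (ya \<noteq> yb))) else p1 = q1 \<and> n1 = (ya \<noteq> yb)) \<and>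
      (if em \<and> \<not> m then {p2,q2} \<in> EB \<and> ((\<sigma>B {p2,q2} = -1) = ((nE \<noteq> n1) \<noteq> (za \<noteq> zb))) else p2 = q2 \<and> (nE \<noteq> n1) = (za \<noteq> zb)))"
proof (cases em)
  case False
  have mF: "\<not> m" using m False by simp
  have n1v: "n1 = (ya \<noteq> yb)" using n1 mF by simp
  show ?thesis using mF n1v False
    apply (simp only: if_True if_False mF simp_thms prod.inject)
    apply (cases ya; cases yb; cases za; cases zb; cases nE; simp)
    done
next
  case em: True
  show ?thesis
  proof (cases "p1 = q1")
    case True
    have nA: "{p1,q1} \<notin> EA" using True sg_edge_neq[OF sgA] by blast
    have "({(p1,p2),(q1,q2)} \<in> cprod_E VA EA VB EB) = ({p2,q2} \<in> EB)"
      using cprod_edge[OF sgA sgB V] True nA by auto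
    have mF: "\<not> m" using m True by simp
    have n1v: "n1 = (ya \<noteq> yb)" using n1 mF by simp
    show ?thesis unfolding \<open>p1 = q1\<close> using mF n1v em cprod_sig1[of \<sigma>A \<sigma>B q1 p2 q2] \<open>_ = ({p2, q2} \<in> EB)\<close>[unfolded \<open>p1 = q1\<close>]
      apply (simp only: if_True if_False mF em simp_thms)
      apply (cases ya; cases yb; cases za; cases zb; cases nE; simp)
      done
  next
    case False
    have "({(p1,p2),(q1,q2)} \<in> cprod_E VA EA VB EB) = (p2 = q2 \<and> {p1,q1} \<in> EA)"
      using cprod_edge[OF sgA sgB V] False by auto
    have mT: "m" using m em False by simp
    have n1v: "n1 = ((\<sigma>A {p1,q1} = -1) \<noteq> (ya \<noteq> yb))" using n1 mT by simp
    show ?thesis using mT n1v em False cprod_sig2[OF False, of \<sigma>A \<sigma>B p2] \<open>_ = (p2 = q2 \<and> _)\<close>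
      apply (cases "p2 = q2")
       apply (simp only: if_True if_False mT em simp_thms)
       apply (cases ya; cases yb; cases za; cases zb; cases nE; simp)
      apply simp
      done
  qed
qed

lemma edge_unique:
  fixes ya yb :: bool
  assumes sgA: "signed_graph VA EA \<sigma>A"
    and mem: "m' \<longrightarrow> em"
    and A: "if m' then {p1,q1} \<in> EA \<and> ((\<sigma>A {p1,q1} = -1) = (n' \<noteq> (ya \<noteq> yb))) else p1 = q1 \<and> n' = (ya \<noteq> yb)"
    and B: "if em \<and> \<not> m' then P else p2 = q2 \<and> R"
    and m: "m = (em \<and> p1 \<noteq> q1)"
    and n1: "n1 = (if m then (\<sigma>A {p1,q1} = -1) \<noteq> (ya \<noteq> yb) else (ya \<noteq> yb))"
  shows "m' = m \<and> n' = n1"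
proof (cases m')
  case True
  then have "p1 \<noteq> q1" using A sg_edge_neq[OF sgA] by auto
  then show ?thesis using True A mem m n1 by auto
next
  case False
  then show ?thesis using A m n1 by auto
qed

lemma ok_split:
  fixes M N :: "nat set" and y z :: "nat \<Rightarrow> bool"
  assumes sgA: "signed_graph VA EA \<sigma>A" and sgB: "signed_graph VB EB \<sigma>B"
    and w: "wfe n I ea eb" and wQ: "wfp n Q"
    and \<phi>1: "\<phi>1 \<in> {..<n} \<rightarrow>\<^sub>E VA" and \<phi>2: "\<phi>2 \<in> {..<n} \<rightarrow>\<^sub>E VB"
  defines "m0 \<equiv> {e\<in>M. \<phi>1 (ea e) \<noteq> \<phi>1 (eb e)}"
  defines "n0 \<equiv> {e\<in>I. if e \<in> m0 then (\<sigma>A {\<phi>1 (ea e), \<phi>1 (eb e)} = -1) \<noteq> (y (ea e) \<noteq> y (eb e)) else (y (ea e) \<noteq> y (eb e))}"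
  shows "okm (cprod_E VA EA VB EB) (cprod_sig \<sigma>A \<sigma>B) I ea eb Q {} M N
           (restrict (\<lambda>a. (\<phi>1 a, \<phi>2 a)) {..<n}) (restrict (\<lambda>a. (y a \<noteq> z a)) {..<n})
     = (okm EA \<sigma>A I ea eb Q {} m0 n0 \<phi>1 y \<and> okm EB \<sigma>B I ea eb Q {} (M - m0) {e. (e\<in>N) \<noteq> (e\<in>n0)} \<phi>2 z)"
proof -
  define \<psi> where "\<psi> = restrict (\<lambda>a. (\<phi>1 a, \<phi>2 a)) {..<n}"
  define x where "x = restrict (\<lambda>a. (y a \<noteq> z a)) {..<n}"
  have wI: "\<And>e. e \<in> I \<Longrightarrow> ea e < n \<and> eb e < n" using w unfolding wfe_def by blast
  have wQ': "\<And>p. p \<in> Q \<Longrightarrow> fst p < n \<and> snd p < n" using wQ unfolding wfp_def by blast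
  have E: "(if e \<in> M then {\<psi> (ea e), \<psi> (eb e)} \<in> cprod_E VA EA VB EB \<and> ((cprod_sig \<sigma>A \<sigma>B {\<psi> (ea e), \<psi> (eb e)} = -1) = ((e \<in> N) \<noteq> (x (ea e) \<noteq> x (eb e))))
         else \<psi> (ea e) = \<psi> (eb e) \<and> ((e \<in> N) = (x (ea e) \<noteq> x (eb e))))
      = ((if e \<in> m0 then {\<phi>1 (ea e), \<phi>1 (eb e)} \<in> EA \<and> ((\<sigma>A {\<phi>1 (ea e), \<phi>1 (eb e)} = -1) = ((e \<in> n0) \<noteq> (y (ea e) \<noteq> y (eb e))))
         else \<phi>1 (ea e) = \<phi>1 (eb e) \<and> ((e \<in> n0) = (y (ea e) \<noteq> y (eb e)))) \<and>
         (if e \<in> M - m0 then {\<phi>2 (ea e), \<phi>2 (eb e)} \<in> EB \<and> ((\<sigma>B {\<phi>2 (ea e), \<phi>2 (eb e)} = -1) = ((e \<in> {e. (e\<in>N) \<noteq> (e\<in>n0)}) \<noteq> (z (ea e) \<noteq> z (eb e))))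
         else \<phi>2 (ea e) = \<phi>2 (eb e) \<and> ((e \<in> {e. (e\<in>N) \<noteq> (e\<in>n0)}) = (z (ea e) \<noteq> z (eb e)))))"
    if e: "e \<in> I" for e
  proof -
    have ab: "ea e < n" "eb e < n" using wI[OF e] by auto
    have V: "\<phi>1 (ea e) \<in> VA" "\<phi>1 (eb e) \<in> VA" "\<phi>2 (ea e) \<in> VB" "\<phi>2 (eb e) \<in> VB"
      using ab \<phi>1 \<phi>2 by auto
    have \<psi>v: "\<psi> (ea e) = (\<phi>1 (ea e), \<phi>2 (ea e))" "\<psi> (eb e) = (\<phi>1 (eb e), \<phi>2 (eb e))"
      unfolding \<psi>_def using ab by auto
    have xv: "x (ea e) = (y (ea e) \<noteq> z (ea e))" "x (eb e) = (y (eb e) \<noteq> z (eb e))"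
      unfolding x_def using ab by auto
    have mm: "(e \<in> m0) = (e \<in> M \<and> \<phi>1 (ea e) \<noteq> \<phi>1 (eb e))" unfolding m0_def by simp
    have nn: "(e \<in> n0) = (if e \<in> m0 then (\<sigma>A {\<phi>1 (ea e), \<phi>1 (eb e)} = -1) \<noteq> (y (ea e) \<noteq> y (eb e)) else (y (ea e) \<noteq> y (eb e)))"
      unfolding n0_def using e by simp
    have M': "(e \<in> M - m0) = (e \<in> M \<and> \<not> e \<in> m0)" by simp
    have N': "(e \<in> {e. (e\<in>N) \<noteq> (e\<in>n0)}) = ((e\<in>N) \<noteq> (e\<in>n0))" by simp
    show ?thesis unfolding \<psi>v xv M' N'
      by (rule edge_split[OF sgA sgB V mm nn])
  qed
  have Qe: "(\<psi> (fst p) = \<psi> (snd p)) = (\<phi>1 (fst p) = \<phi>1 (snd p) \<and> \<phi>2 (fst p) = \<phi>2 (snd p))" if "p \<in> Q" for p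
    unfolding \<psi>_def using wQ'[OF that] by auto
  show ?thesis
    unfolding \<psi>_def[symmetric] x_def[symmetric] okm_def
    using E Qe by (auto simp: ball_conj_distrib)
qed

lemma ok_unique:
  assumes sgA: "signed_graph VA EA \<sigma>A"
    and MI: "M1 \<subseteq> M" "N1 \<subseteq> I"
    and A: "okm EA \<sigma>A I ea eb Q {} M1 N1 \<phi>1 y"
    and B: "okm EB \<sigma>B I ea eb Q {} (M - M1) N' \<phi>2 z"
  defines "m0 \<equiv> {e\<in>M. \<phi>1 (ea e) \<noteq> \<phi>1 (eb e)}"
  defines "n0 \<equiv> {e\<in>I. if e \<in> m0 then (\<sigma>A {\<phi>1 (ea e), \<phi>1 (eb e)} = -1) \<noteq> (y (ea e) \<noteq> y (eb e)) else (y (ea e) \<noteq> y (eb e))}"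
  assumes M0: "M \<subseteq> I"
  shows "M1 = m0 \<and> N1 = n0"
proof -
  have *: "(e \<in> M1) = (e \<in> m0) \<and> (e \<in> N1) = (e \<in> n0)" if e: "e \<in> I" for e
  proof -
    have a: "if e \<in> M1 then {\<phi>1 (ea e), \<phi>1 (eb e)} \<in> EA \<and> ((\<sigma>A {\<phi>1 (ea e), \<phi>1 (eb e)} = -1) = ((e \<in> N1) \<noteq> (y (ea e) \<noteq> y (eb e))))
         else \<phi>1 (ea e) = \<phi>1 (eb e) \<and> ((e \<in> N1) = (y (ea e) \<noteq> y (eb e)))"
      using A e unfolding okm_def by blast
    have b: "if e \<in> M \<and> \<not> e \<in> M1 then {\<phi>2 (ea e), \<phi>2 (eb e)} \<in> EB \<and> ((\<sigma>B {\<phi>2 (ea e), \<phi>2 (eb e)} = -1) = ((e \<in> N') \<noteq> (z (ea e) \<noteq> z (eb e))))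
         else \<phi>2 (ea e) = \<phi>2 (eb e) \<and> ((e \<in> N') = (z (ea e) \<noteq> z (eb e)))"
      using B e unfolding okm_def by (metis Diff_iff)
    have mm: "(e \<in> m0) = (e \<in> M \<and> \<phi>1 (ea e) \<noteq> \<phi>1 (eb e))" unfolding m0_def by simp
    have nn: "(e \<in> n0) = (if e \<in> m0 then (\<sigma>A {\<phi>1 (ea e), \<phi>1 (eb e)} = -1) \<noteq> (y (ea e) \<noteq> y (eb e)) else (y (ea e) \<noteq> y (eb e)))"
      unfolding n0_def using e by simp
    have "e \<in> M1 \<longrightarrow> e \<in> M" using MI by blast
    from edge_unique[OF sgA this a b mm nn] show ?thesis .
  qed
  have "M1 = m0" using * MI M0 unfolding m0_def by blast
  moreover have "N1 = n0" using * MI unfolding n0_def by blast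
  ultimately show ?thesis by blast
qed


lemma point_sum:
  fixes M N :: "nat set" and y z :: "nat \<Rightarrow> bool"
  assumes sgA: "signed_graph VA EA \<sigma>A" and sgB: "signed_graph VB EB \<sigma>B"
    and w: "wfe n I ea eb" and wQ: "wfp n Q" and MI: "M \<subseteq> I" and fI: "finite I"
    and \<phi>1: "\<phi>1 \<in> {..<n} \<rightarrow>\<^sub>E VA" and \<phi>2: "\<phi>2 \<in> {..<n} \<rightarrow>\<^sub>E VB"
  shows "(if okm (cprod_E VA EA VB EB) (cprod_sig \<sigma>A \<sigma>B) I ea eb Q {} M N
           (restrict (\<lambda>a. (\<phi>1 a, \<phi>2 a)) {..<n}) (restrict (\<lambda>a. (y a \<noteq> z a)) {..<n}) then 1 else 0)
   = (\<Sum>M1\<in>Pow M. \<Sum>N1\<in>Pow I. (if okm EA \<sigma>A I ea eb Q {} M1 N1 \<phi>1 y then 1 else 0) *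
        (if okm EB \<sigma>B I ea eb Q {} (M - M1) {e. (e\<in>N) \<noteq> (e\<in>N1)} \<phi>2 z then 1 else (0::nat)))"
proof -
  define m0 where "m0 = {e\<in>M. \<phi>1 (ea e) \<noteq> \<phi>1 (eb e)}"
  define n0 where "n0 = {e\<in>I. if e \<in> m0 then (\<sigma>A {\<phi>1 (ea e), \<phi>1 (eb e)} = -1) \<noteq> (y (ea e) \<noteq> y (eb e)) else (y (ea e) \<noteq> y (eb e))}"
  define F where "F = (\<lambda>p::nat set \<times> nat set. (if okm EA \<sigma>A I ea eb Q {} (fst p) (snd p) \<phi>1 y then 1 else 0) *
        (if okm EB \<sigma>B I ea eb Q {} (M - fst p) {e. (e\<in>N) \<noteq> (e\<in>snd p)} \<phi>2 z then 1 else (0::nat)))"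
  have fin: "finite (Pow M \<times> Pow I)" using MI fI by (simp add: finite_subset)
  have FF: "F p = (if p = (m0, n0) then F (m0, n0) else 0)" if p: "p \<in> Pow M \<times> Pow I" for p
  proof (cases "F p = 0")
    case False
    then have A: "okm EA \<sigma>A I ea eb Q {} (fst p) (snd p) \<phi>1 y"
      and B: "okm EB \<sigma>B I ea eb Q {} (M - fst p) {e. (e\<in>N) \<noteq> (e\<in>snd p)} \<phi>2 z"
      unfolding F_def by (auto split: if_splits)
    have "fst p = m0 \<and> snd p = n0"
      unfolding n0_def m0_def
      by (rule ok_unique[OF sgA _ _ A B]) (use p MI in auto)
    then show ?thesis by (cases p) auto
  qed auto
  have "(\<Sum>M1\<in>Pow M. \<Sum>N1\<in>Pow I. (if okm EA \<sigma>A I ea eb Q {} M1 N1 \<phi>1 y then 1 else 0) *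
        (if okm EB \<sigma>B I ea eb Q {} (M - M1) {e. (e\<in>N) \<noteq> (e\<in>N1)} \<phi>2 z then 1 else (0::nat)))
      = (\<Sum>p\<in>Pow M \<times> Pow I. F p)"
    unfolding F_def sum.cartesian_product by (simp add: case_prod_beta)
  also have "\<dots> = (\<Sum>p\<in>Pow M \<times> Pow I. if p = (m0, n0) then F (m0, n0) else 0)"
    using FF by (rule sum.cong[OF refl])
  also have "\<dots> = F (m0, n0)"
    using fin by (simp add: m0_def n0_def)
  also have "\<dots> = (if okm (cprod_E VA EA VB EB) (cprod_sig \<sigma>A \<sigma>B) I ea eb Q {} M N
           (restrict (\<lambda>a. (\<phi>1 a, \<phi>2 a)) {..<n}) (restrict (\<lambda>a. (y a \<noteq> z a)) {..<n}) then 1 else 0)"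
    unfolding F_def fst_conv snd_conv m0_def n0_def
    using ok_split[OF sgA sgB w wQ \<phi>1 \<phi>2, of M N y z] by simp
  finally show ?thesis by simp
qed

lemma card_X: "card ({..<n::nat} \<rightarrow>\<^sub>E (UNIV::bool set)) = 2 ^ n"
  by (simp add: card_PiE)

lemma xr_bij:
  fixes y :: "nat \<Rightarrow> bool"
  assumes "y \<in> {..<n} \<rightarrow>\<^sub>E UNIV"
  shows "bij_betw (\<lambda>z. restrict (\<lambda>a. y a \<noteq> z a) {..<n}) ({..<n} \<rightarrow>\<^sub>E UNIV) ({..<n} \<rightarrow>\<^sub>E UNIV)"
  by (rule bij_betwI[where g = "\<lambda>z. restrict (\<lambda>a. y a \<noteq> z a) {..<n}"]) (auto simp: PiE_iff fun_eq_iff extensional_def)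

lemma pr_bij:
  "bij_betw (\<lambda>p. restrict (\<lambda>a. (fst p a, snd p a)) {..<n}) (({..<n} \<rightarrow>\<^sub>E VA) \<times> ({..<n} \<rightarrow>\<^sub>E VB)) ({..<n} \<rightarrow>\<^sub>E VA \<times> VB)"
  by (rule bij_betwI[where g = "\<lambda>\<psi>. (restrict (\<lambda>a. fst (\<psi> a)) {..<n}, restrict (\<lambda>a. snd (\<psi> a)) {..<n})"])
     (auto simp: PiE_iff fun_eq_iff extensional_def mem_Times_iff)

lemma prod_formula:
  assumes sgA: "signed_graph VA EA \<sigma>A" and sgB: "signed_graph VB EB \<sigma>B"
    and fA: "finite VA" and fB: "finite VB"
    and w: "wfe n I ea eb" and wQ: "wfp n Q" and MI: "M \<subseteq> I" and fI: "finite I"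
  shows "2^n * cnt (cprod_V VA VB) (cprod_E VA EA VB EB) (cprod_sig \<sigma>A \<sigma>B) n I ea eb Q {} M N =
    (\<Sum>M1\<in>Pow M. \<Sum>N1\<in>Pow I. cnt VA EA \<sigma>A n I ea eb Q {} M1 N1 * cnt VB EB \<sigma>B n I ea eb Q {} (M - M1) {e. (e\<in>N) \<noteq> (e\<in>N1)})"
proof -
  define X where "X = {..<n} \<rightarrow>\<^sub>E (UNIV::bool set)"
  define PA where "PA = {..<n} \<rightarrow>\<^sub>E VA"
  define PB where "PB = {..<n} \<rightarrow>\<^sub>E VB"
  define T where "T = Pow M \<times> Pow I"
  define iAB where "iAB = (\<lambda>\<phi> x. if okm (cprod_E VA EA VB EB) (cprod_sig \<sigma>A \<sigma>B) I ea eb Q {} M N \<phi> x then 1 else (0::nat))"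
  define fa where "fa = (\<lambda>t::nat set \<times> nat set. \<lambda>\<phi>1 y. if okm EA \<sigma>A I ea eb Q {} (fst t) (snd t) \<phi>1 y then 1 else (0::nat))"
  define fb where "fb = (\<lambda>t::nat set \<times> nat set. \<lambda>\<phi>2 z. if okm EB \<sigma>B I ea eb Q {} (M - fst t) {e. (e\<in>N) \<noteq> (e\<in>snd t)} \<phi>2 z then 1 else (0::nat))"
  define pr where "pr = (\<lambda>p::(nat \<Rightarrow> 'a) \<times> (nat \<Rightarrow> 'b). restrict (\<lambda>a. (fst p a, snd p a)) {..<n})"
  define xr where "xr = (\<lambda>y z::nat \<Rightarrow> bool. restrict (\<lambda>a. y a \<noteq> z a) {..<n})"
  have finX: "finite X" unfolding X_def by (rule finX)
  have finPA: "finite PA" unfolding PA_def using fA by (intro finite_PiE) auto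
  have finPB: "finite PB" unfolding PB_def using fB by (intro finite_PiE) auto
  have finT: "finite T" unfolding T_def using MI fI by (simp add: finite_subset)
  define S where "S = (PA \<times> PB) \<times> (X \<times> X)"
  have step1: "2^n * cnt (cprod_V VA VB) (cprod_E VA EA VB EB) (cprod_sig \<sigma>A \<sigma>B) n I ea eb Q {} M N
      = (\<Sum>s\<in>S. iAB (pr (fst s)) (xr (fst (snd s)) (snd (snd s))))"
  proof -
    have inner: "(\<Sum>q\<in>X \<times> X. iAB \<phi> (xr (fst q) (snd q))) = 2^n * (\<Sum>x\<in>X. iAB \<phi> x)" for \<phi>
    proof -
      have "(\<Sum>q\<in>X \<times> X. iAB \<phi> (xr (fst q) (snd q))) = (\<Sum>y\<in>X. \<Sum>z\<in>X. iAB \<phi> (xr y z))"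
        by (simp add: sum.cartesian_product case_prod_beta)
      also have "\<dots> = (\<Sum>y\<in>X. \<Sum>x\<in>X. iAB \<phi> x)"
      proof (rule sum.cong[OF refl])
        fix y assume "y \<in> X"
        then show "(\<Sum>z\<in>X. iAB \<phi> (xr y z)) = (\<Sum>x\<in>X. iAB \<phi> x)"
          unfolding xr_def X_def by (rule sum.reindex_bij_betw[OF xr_bij])
      qed
      also have "\<dots> = 2^n * (\<Sum>x\<in>X. iAB \<phi> x)" unfolding X_def by (simp add: card_X)
      finally show ?thesis .
    qed
    have "(\<Sum>s\<in>S. iAB (pr (fst s)) (xr (fst (snd s)) (snd (snd s))))
        = (\<Sum>p\<in>PA \<times> PB. \<Sum>q\<in>X \<times> X. iAB (pr p) (xr (fst q) (snd q)))"
      unfolding S_def by (simp add: sum.cartesian_product case_prod_beta)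
    also have "\<dots> = (\<Sum>p\<in>PA \<times> PB. 2^n * (\<Sum>x\<in>X. iAB (pr p) x))" using inner by simp
    also have "\<dots> = (\<Sum>\<phi>\<in>{..<n} \<rightarrow>\<^sub>E VA \<times> VB. 2^n * (\<Sum>x\<in>X. iAB \<phi> x))"
      unfolding PA_def PB_def pr_def by (rule sum.reindex_bij_betw[OF pr_bij])
    also have "\<dots> = 2^n * cnt (cprod_V VA VB) (cprod_E VA EA VB EB) (cprod_sig \<sigma>A \<sigma>B) n I ea eb Q {} M N"
      unfolding cnt_def cprod_V_def iAB_def X_def by (simp add: sum_distrib_left)
    finally show ?thesis by simp
  qed
  have step2: "iAB (pr (fst s)) (xr (fst (snd s)) (snd (snd s))) = (\<Sum>t\<in>T. fa t (fst (fst s)) (fst (snd s)) * fb t (snd (fst s)) (snd (snd s)))"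
    if s: "s \<in> S" for s
  proof -
    obtain \<phi>1 \<phi>2 y z where sv: "s = ((\<phi>1, \<phi>2), (y, z))" by (metis prod.collapse)
    have \<phi>1: "\<phi>1 \<in> {..<n} \<rightarrow>\<^sub>E VA" and \<phi>2: "\<phi>2 \<in> {..<n} \<rightarrow>\<^sub>E VB" using s sv unfolding S_def PA_def PB_def by auto
    show ?thesis unfolding sv fst_conv snd_conv iAB_def pr_def xr_def T_def fa_def fb_def
      using point_sum[OF sgA sgB w wQ MI fI \<phi>1 \<phi>2, of N y z]
      by (simp add: sum.cartesian_product case_prod_beta)
  qed
  have step3: "(\<Sum>s\<in>S. fa t (fst (fst s)) (fst (snd s)) * fb t (snd (fst s)) (snd (snd s)))
      = cnt VA EA \<sigma>A n I ea eb Q {} (fst t) (snd t) * cnt VB EB \<sigma>B n I ea eb Q {} (M - fst t) {e. (e\<in>N) \<noteq> (e\<in>snd t)}" for t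
  proof -
    have bj: "bij_betw (\<lambda>u. ((fst (fst u), fst (snd u)), (snd (fst u), snd (snd u)))) ((PA \<times> X) \<times> (PB \<times> X)) S"
      unfolding S_def by (rule bij_betwI[where g = "\<lambda>s. ((fst (fst s), fst (snd s)), (snd (fst s), snd (snd s)))"]) auto
    have "cnt VA EA \<sigma>A n I ea eb Q {} (fst t) (snd t) * cnt VB EB \<sigma>B n I ea eb Q {} (M - fst t) {e. (e\<in>N) \<noteq> (e\<in>snd t)}
        = (\<Sum>u\<in>PA \<times> X. fa t (fst u) (snd u)) * (\<Sum>v\<in>PB \<times> X. fb t (fst v) (snd v))"
      unfolding cnt_alt fa_def fb_def PA_def PB_def X_def by simp
    also have "\<dots> = (\<Sum>u\<in>(PA \<times> X) \<times> (PB \<times> X). fa t (fst (fst u)) (snd (fst u)) * fb t (fst (snd u)) (snd (snd u)))"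
      by (simp add: sum_product sum.cartesian_product case_prod_beta)
    also have "\<dots> = (\<Sum>s\<in>S. fa t (fst (fst s)) (fst (snd s)) * fb t (snd (fst s)) (snd (snd s)))"
      using sum.reindex_bij_betw[OF bj, of "\<lambda>s. fa t (fst (fst s)) (fst (snd s)) * fb t (snd (fst s)) (snd (snd s))"] by simp
    finally show ?thesis by simp
  qed
  have "2^n * cnt (cprod_V VA VB) (cprod_E VA EA VB EB) (cprod_sig \<sigma>A \<sigma>B) n I ea eb Q {} M N
      = (\<Sum>s\<in>S. \<Sum>t\<in>T. fa t (fst (fst s)) (fst (snd s)) * fb t (snd (fst s)) (snd (snd s)))"
    using step1 step2 by simp
  also have "\<dots> = (\<Sum>t\<in>T. \<Sum>s\<in>S. fa t (fst (fst s)) (fst (snd s)) * fb t (snd (fst s)) (snd (snd s)))"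
    by (rule sum.swap)
  also have "\<dots> = (\<Sum>t\<in>T. cnt VA EA \<sigma>A n I ea eb Q {} (fst t) (snd t) * cnt VB EB \<sigma>B n I ea eb Q {} (M - fst t) {e. (e\<in>N) \<noteq> (e\<in>snd t)})"
    using step3 by simp
  also have "\<dots> = (\<Sum>M1\<in>Pow M. \<Sum>N1\<in>Pow I. cnt VA EA \<sigma>A n I ea eb Q {} M1 N1 * cnt VB EB \<sigma>B n I ea eb Q {} (M - M1) {e. (e\<in>N) \<noteq> (e\<in>N1)})"
    unfolding T_def by (simp add: sum.cartesian_product case_prod_beta)
  finally show ?thesis .
qed

lemma cnt_nz:
  assumes "cnt V E \<sigma> n I ea eb Q D M N \<noteq> 0"
  shows "\<exists>\<phi>\<in>{..<n} \<rightarrow>\<^sub>E V. \<exists>x\<in>{..<n} \<rightarrow>\<^sub>E (UNIV::bool set). okm E \<sigma> I ea eb Q D M N \<phi> x"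
proof (rule ccontr)
  assume "\<not> ?thesis"
  then have nok: "\<And>\<phi> x. \<phi>\<in>{..<n} \<rightarrow>\<^sub>E V \<Longrightarrow> x\<in>{..<n} \<rightarrow>\<^sub>E (UNIV::bool set) \<Longrightarrow> \<not> okm E \<sigma> I ea eb Q D M N \<phi> x" by blast
  have "cnt V E \<sigma> n I ea eb Q D M N = 0" unfolding cnt_def
    by (intro sum.neutral ballI) (simp add: nok)
  then show False using assms by simp
qed

lemma first_term:
  assumes w: "wfe n I ea eb"
  shows "cnt VA EA \<sigma>A n I ea eb Q {} {} N1 * cnt V E \<sigma> n I ea eb Q {} M {e. (e\<in>N) \<noteq> (e\<in>N1)}
       = cnt VA EA \<sigma>A n I ea eb Q {} {} N1 * cnt V E \<sigma> n I ea eb Q {} M N"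
proof (cases "cnt VA EA \<sigma>A n I ea eb Q {} {} N1 = 0")
  case False
  then obtain \<phi> x where x: "x \<in> {..<n} \<rightarrow>\<^sub>E (UNIV::bool set)" and ok: "okm EA \<sigma>A I ea eb Q {} {} N1 \<phi> x"
    using cnt_nz[OF False] by blast
  have "\<forall>e\<in>I. \<phi> (ea e) = \<phi> (eb e) \<and> ((e\<in>N1) = (x (ea e) \<noteq> x (eb e)))" using ok unfolding okm_def by simp
  then have N1x: "\<forall>e\<in>I. (e\<in>N1) = (x (ea e) \<noteq> x (eb e))" by blast
  have "cnt V E \<sigma> n I ea eb Q {} M {e. (e\<in>N) \<noteq> (e\<in>N1)} = cnt V E \<sigma> n I ea eb Q {} M N"
    by (rule cnt_shift[OF w x N1x])
  then show ?thesis by simp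
qed simp

lemma cancel_counts:
  assumes sgA: "signed_graph VA EA \<sigma>A" and sgB: "signed_graph VB EB \<sigma>B" and sgC: "signed_graph VC EC \<sigma>C"
    and fA: "finite VA" and fB: "finite VB" and fC: "finite VC" and v0: "v0 \<in> VA"
    and w: "wfe n I ea eb" and wQ: "wfp n Q" and fI: "finite I"
    and H: "\<And>M N. M \<subseteq> I \<Longrightarrow> cnt (cprod_V VA VB) (cprod_E VA EA VB EB) (cprod_sig \<sigma>A \<sigma>B) n I ea eb Q {} M N
                  = cnt (cprod_V VA VC) (cprod_E VA EA VC EC) (cprod_sig \<sigma>A \<sigma>C) n I ea eb Q {} M N"
    and MI: "M \<subseteq> I"
  shows "cnt VB EB \<sigma>B n I ea eb Q {} M N = cnt VC EC \<sigma>C n I ea eb Q {} M N"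
proof -
  define c0 where "c0 = (\<Sum>N1\<in>Pow I. cnt VA EA \<sigma>A n I ea eb Q {} {} N1)"
  have "cnt VA EA \<sigma>A n I ea eb Q {} {} {} \<noteq> 0" using cnt_pos[OF v0 fA w wQ, of EA \<sigma>A "{}"] by simp
  moreover have "cnt VA EA \<sigma>A n I ea eb Q {} {} {} \<le> c0"
    unfolding c0_def using fI by (intro member_le_sum) auto
  ultimately have c0: "c0 \<noteq> 0" by linarith
  have "finite M" using MI fI finite_subset by blast
  then show ?thesis using MI
  proof (induction M arbitrary: N rule: finite_psubset_induct)
    case (psubset M)
    have fPM: "finite (Pow M)" using psubset.hyps by simp
    define FB where "FB = (\<lambda>M1. \<Sum>N1\<in>Pow I. cnt VA EA \<sigma>A n I ea eb Q {} M1 N1 * cnt VB EB \<sigma>B n I ea eb Q {} (M - M1) {e. (e\<in>N) \<noteq> (e\<in>N1)})"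
    define FC where "FC = (\<lambda>M1. \<Sum>N1\<in>Pow I. cnt VA EA \<sigma>A n I ea eb Q {} M1 N1 * cnt VC EC \<sigma>C n I ea eb Q {} (M - M1) {e. (e\<in>N) \<noteq> (e\<in>N1)})"
    have pB: "2^n * cnt (cprod_V VA VB) (cprod_E VA EA VB EB) (cprod_sig \<sigma>A \<sigma>B) n I ea eb Q {} M N = (\<Sum>M1\<in>Pow M. FB M1)"
      unfolding FB_def by (rule prod_formula[OF sgA sgB fA fB w wQ psubset.prems fI])
    have pC: "2^n * cnt (cprod_V VA VC) (cprod_E VA EA VC EC) (cprod_sig \<sigma>A \<sigma>C) n I ea eb Q {} M N = (\<Sum>M1\<in>Pow M. FC M1)"
      unfolding FC_def by (rule prod_formula[OF sgA sgC fA fC w wQ psubset.prems fI])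
    have rest: "FB M1 = FC M1" if "M1 \<in> Pow M - {{}}" for M1
    proof -
      have "M - M1 \<subset> M" using that by auto
      moreover have "M - M1 \<subseteq> I" using psubset.prems by auto
      ultimately have "cnt VB EB \<sigma>B n I ea eb Q {} (M - M1) N' = cnt VC EC \<sigma>C n I ea eb Q {} (M - M1) N'" for N'
        using psubset.IH by blast
      then show ?thesis unfolding FB_def FC_def by simp
    qed
    have FB0: "FB {} = c0 * cnt VB EB \<sigma>B n I ea eb Q {} M N"
    proof -
      have "FB {} = (\<Sum>N1\<in>Pow I. cnt VA EA \<sigma>A n I ea eb Q {} {} N1 * cnt VB EB \<sigma>B n I ea eb Q {} M N)"
        unfolding FB_def Diff_empty by (rule sum.cong[OF refl], rule first_term[OF w])
      then show ?thesis by (simp add: c0_def sum_distrib_right)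
    qed
    have FC0: "FC {} = c0 * cnt VC EC \<sigma>C n I ea eb Q {} M N"
    proof -
      have "FC {} = (\<Sum>N1\<in>Pow I. cnt VA EA \<sigma>A n I ea eb Q {} {} N1 * cnt VC EC \<sigma>C n I ea eb Q {} M N)"
        unfolding FC_def Diff_empty by (rule sum.cong[OF refl], rule first_term[OF w])
      then show ?thesis by (simp add: c0_def sum_distrib_right)
    qed
    have "(\<Sum>M1\<in>Pow M. FB M1) = FB {} + (\<Sum>M1\<in>Pow M - {{}}. FB M1)"
      using sum.remove[OF fPM, of "{}"] by simp
    moreover have "(\<Sum>M1\<in>Pow M. FC M1) = FC {} + (\<Sum>M1\<in>Pow M - {{}}. FC M1)"
      using sum.remove[OF fPM, of "{}"] by simp
    moreover have "(\<Sum>M1\<in>Pow M - {{}}. FB M1) = (\<Sum>M1\<in>Pow M - {{}}. FC M1)"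
      using rest by (rule sum.cong[OF refl])
    ultimately have "c0 * cnt VB EB \<sigma>B n I ea eb Q {} M N = c0 * cnt VC EC \<sigma>C n I ea eb Q {} M N"
      using pB pC FB0 FC0 H[OF psubset.prems, of N] by (metis add_right_cancel)
    then show ?case using c0 by simp
  qed
qed

lemma allD:
  assumes H: "\<And>Q M N. wfp n Q \<Longrightarrow> M \<subseteq> I \<Longrightarrow> cnt VB EB \<sigma>B n I ea eb Q {} M N = cnt VC EC \<sigma>C n I ea eb Q {} M N"
    and fD: "finite D" and wD: "wfp n D"
  shows "\<forall>Q M N. wfp n Q \<longrightarrow> M \<subseteq> I \<longrightarrow> cnt VB EB \<sigma>B n I ea eb Q D M N = cnt VC EC \<sigma>C n I ea eb Q D M N"
  using fD wD
proof (induction D rule: finite_induct)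
  case empty
  then show ?case using H by blast
next
  case (insert p D)
  have wD': "wfp n D" using insert.prems unfolding wfp_def by auto
  have IH: "\<forall>Q M N. wfp n Q \<longrightarrow> M \<subseteq> I \<longrightarrow> cnt VB EB \<sigma>B n I ea eb Q D M N = cnt VC EC \<sigma>C n I ea eb Q D M N"
    using insert.IH[OF wD'] .
  show ?case
  proof (intro allI impI)
    fix Q M N assume wQ: "wfp n Q" and MI: "M \<subseteq> I"
    have wQ': "wfp n (insert p Q)" using wQ insert.prems unfolding wfp_def by auto
    have b: "cnt VB EB \<sigma>B n I ea eb Q D M N = cnt VB EB \<sigma>B n I ea eb Q (insert p D) M N + cnt VB EB \<sigma>B n I ea eb (insert p Q) D M N"
      by (rule cnt_Dsplit)
    have c: "cnt VC EC \<sigma>C n I ea eb Q D M N = cnt VC EC \<sigma>C n I ea eb Q (insert p D) M N + cnt VC EC \<sigma>C n I ea eb (insert p Q) D M N"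
      by (rule cnt_Dsplit)
    show "cnt VB EB \<sigma>B n I ea eb Q (insert p D) M N = cnt VC EC \<sigma>C n I ea eb Q (insert p D) M N"
      using b c IH wQ wQ' MI by (metis add_right_cancel)
  qed
qed

lemma cnt_nz_of:
  assumes "finite V" "\<phi> \<in> {..<n} \<rightarrow>\<^sub>E V" "x \<in> {..<n} \<rightarrow>\<^sub>E (UNIV::bool set)" "okm E \<sigma> I ea eb Q D M N \<phi> x"
  shows "cnt V E \<sigma> n I ea eb Q D M N \<noteq> 0"
proof -
  have fin1: "finite ({..<n} \<rightarrow>\<^sub>E V)" using assms(1) by (intro finite_PiE) auto
  have "(1::nat) \<le> (\<Sum>x\<in>{..<n} \<rightarrow>\<^sub>E UNIV. if okm E \<sigma> I ea eb Q D M N \<phi> x then 1 else 0)"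
    using member_le_sum[OF assms(3), of "\<lambda>x. if okm E \<sigma> I ea eb Q D M N \<phi> x then (1::nat) else 0"] assms(4) finX by simp
  also have "\<dots> \<le> cnt V E \<sigma> n I ea eb Q D M N"
    unfolding cnt_def using member_le_sum[OF assms(2), of "\<lambda>\<phi>. \<Sum>x\<in>{..<n} \<rightarrow>\<^sub>E UNIV. if okm E \<sigma> I ea eb Q D M N \<phi> x then (1::nat) else 0"] fin1 by simp
  finally show ?thesis by simp
qed

lemma embed:
  assumes sgB: "signed_graph VB EB \<sigma>B" and sgC: "signed_graph VC EC \<sigma>C"
    and fB: "finite VB" and fC: "finite VC"
    and H: "\<And>n I ea eb Q D M N. finite I \<Longrightarrow> wfe n I ea eb \<Longrightarrow> wfp n Q \<Longrightarrow> wfp n D \<Longrightarrow> finite D \<Longrightarrow> M \<subseteq> I \<Longrightarrow>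
              cnt VB EB \<sigma>B n I ea eb Q D M N = cnt VC EC \<sigma>C n I ea eb Q D M N"
  shows "\<exists>g S. inj_on g VB \<and> g ` VB \<subseteq> VC \<and> S \<subseteq> VB \<and> (\<forall>e\<in>EB. g ` e \<in> EC \<and> \<sigma>C (g ` e) = switch \<sigma>B S e)"
proof -
  define n where "n = card VB"
  obtain \<beta> where \<beta>: "bij_betw \<beta> {..<n} VB"
    using ex_bij_betw_nat_finite[OF fB] unfolding n_def atLeast0LessThan by blast
  have \<beta>inj: "inj_on \<beta> {..<n}" using \<beta> by (simp add: bij_betw_def)
  have \<beta>V: "\<And>a. a < n \<Longrightarrow> \<beta> a \<in> VB" using \<beta> by (meson bij_betwE lessThan_iff)
  define iv where "iv = inv_into {..<n} \<beta>"
  have ivl: "\<And>v. v \<in> VB \<Longrightarrow> iv v < n" unfolding iv_def using \<beta>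
    by (metis bij_betw_def inv_into_into lessThan_iff)
  have ivr: "\<And>v. v \<in> VB \<Longrightarrow> \<beta> (iv v) = v" unfolding iv_def using \<beta> by (simp add: bij_betw_inv_into_right)
  define I where "I = {e. e < n * n \<and> e div n < e mod n \<and> {\<beta> (e div n), \<beta> (e mod n)} \<in> EB}"
  define ea where "ea = (\<lambda>e::nat. e div n)"
  define eb where "eb = (\<lambda>e::nat. e mod n)"
  define N where "N = {e\<in>I. \<sigma>B {\<beta> (e div n), \<beta> (e mod n)} = -1}"
  define D where "D = {p::nat\<times>nat. fst p < n \<and> snd p < n \<and> fst p \<noteq> snd p}"
  have fI: "finite I" unfolding I_def by (rule finite_subset[of _ "{..<n*n}"]) auto
  have wI: "wfe n I ea eb" unfolding wfe_def I_def ea_def eb_def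
  proof (intro ballI conjI)
    fix e assume "e \<in> {e. e < n * n \<and> e div n < e mod n \<and> {\<beta> (e div n), \<beta> (e mod n)} \<in> EB}"
    then have e: "e < n * n" by simp
    then show "e div n < n" by (simp add: less_mult_imp_div_less)
    from e have "n > 0" by (cases n) auto
    then show "e mod n < n" by simp
  qed
  have wQ: "wfp n {}" unfolding wfp_def by simp
  have wD: "wfp n D" unfolding wfp_def D_def by simp
  have fD: "finite D" unfolding D_def by (rule finite_subset[of _ "{..<n} \<times> {..<n}"]) auto
  define \<phi>0 where "\<phi>0 = restrict \<beta> {..<n}"
  define x0 :: "nat \<Rightarrow> bool" where "x0 = restrict (\<lambda>_. False) {..<n}"
  have ok0: "okm EB \<sigma>B I ea eb {} D I N \<phi>0 x0"
    unfolding okm_def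
  proof (intro conjI ballI)
    fix e assume e: "e \<in> I"
    have ab: "ea e < n" "eb e < n" using wI e unfolding wfe_def by auto
    have "{\<beta> (ea e), \<beta> (eb e)} \<in> EB" using e unfolding I_def ea_def eb_def by simp
    then show "if e \<in> I then {\<phi>0 (ea e), \<phi>0 (eb e)} \<in> EB \<and> (\<sigma>B {\<phi>0 (ea e), \<phi>0 (eb e)} = - 1) = ((e \<in> N) \<noteq> (x0 (ea e) \<noteq> x0 (eb e)))
          else \<phi>0 (ea e) = \<phi>0 (eb e) \<and> (e \<in> N) = (x0 (ea e) \<noteq> x0 (eb e))"
      using e ab unfolding \<phi>0_def x0_def N_def ea_def eb_def by simp
  next
    fix p assume "p \<in> D"
    then show "\<phi>0 (fst p) \<noteq> \<phi>0 (snd p)" unfolding D_def \<phi>0_def using \<beta>inj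
      by (auto dest: inj_onD)
  qed simp
  have "cnt VB EB \<sigma>B n I ea eb {} D I N \<noteq> 0"
    by (rule cnt_nz_of[OF fB _ _ ok0]) (auto simp: \<phi>0_def x0_def \<beta>V)
  then have "cnt VC EC \<sigma>C n I ea eb {} D I N \<noteq> 0" using H[OF fI wI wQ wD fD] by simp
  then obtain \<phi> x where \<phi>: "\<phi> \<in> {..<n} \<rightarrow>\<^sub>E VC" and x: "x \<in> {..<n} \<rightarrow>\<^sub>E (UNIV::bool set)"
    and ok: "okm EC \<sigma>C I ea eb {} D I N \<phi> x"
    using cnt_nz by blast
  define g where "g = (\<lambda>v. \<phi> (iv v))"
  define S where "S = \<beta> ` {a. a < n \<and> x a}"
  have inj: "inj_on g VB"
  proof (rule inj_onI)
    fix u v assume u: "u \<in> VB" and v: "v \<in> VB" and guv: "g u = g v"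
    show "u = v"
    proof (rule ccontr)
      assume "u \<noteq> v"
      then have "iv u \<noteq> iv v" using ivr u v by metis
      then have "(iv u, iv v) \<in> D" unfolding D_def using ivl u v by simp
      then have "\<phi> (iv u) \<noteq> \<phi> (iv v)" using ok unfolding okm_def by fastforce
      then show False using guv unfolding g_def by simp
    qed
  qed
  have img: "g ` VB \<subseteq> VC" unfolding g_def using \<phi> ivl by auto
  have SV: "S \<subseteq> VB" unfolding S_def using \<beta>V by auto
  have K: "{\<phi> a, \<phi> b} \<in> EC \<and> \<sigma>C {\<phi> a, \<phi> b} = switch \<sigma>B S {\<beta> a, \<beta> b}"
    if ab: "a < b" "b < n" and eB: "{\<beta> a, \<beta> b} \<in> EB" for a b
  proof -
    define k where "k = a * n + b"
    have "a * n + b < a * n + n" using ab by simp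
    also have "\<dots> = (a + 1) * n" by simp
    also have "\<dots> \<le> n * n" using ab by (intro mult_right_mono) auto
    finally have kl: "k < n * n" unfolding k_def .
    have kd: "k div n = a" "k mod n = b" unfolding k_def using ab by auto
    have kI: "k \<in> I" unfolding I_def using kl kd ab eB by simp
    have kN: "(k \<in> N) = (\<sigma>B {\<beta> a, \<beta> b} = -1)" unfolding N_def using kI kd by simp
    have okk: "{\<phi> a, \<phi> b} \<in> EC \<and> (\<sigma>C {\<phi> a, \<phi> b} = -1) = ((k \<in> N) \<noteq> (x a \<noteq> x b))"
      using ok kI kd unfolding okm_def ea_def eb_def by fastforce
    have ne: "\<beta> a \<noteq> \<beta> b" using \<beta>inj ab by (metis inj_onD lessThan_iff order.strict_trans less_irrefl)
    have Sa: "(\<beta> a \<in> S) = x a" "(\<beta> b \<in> S) = x b"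
      unfolding S_def using \<beta>inj ab by (auto dest: inj_onD)
    have sB: "\<sigma>B {\<beta> a, \<beta> b} = 1 \<or> \<sigma>B {\<beta> a, \<beta> b} = -1" using sg_sign[OF sgB eB] .
    have sC: "\<sigma>C {\<phi> a, \<phi> b} = 1 \<or> \<sigma>C {\<phi> a, \<phi> b} = -1" using sg_sign[OF sgC] okk by blast
    show ?thesis using okk kN switch_pair[OF ne, of \<sigma>B S] Sa sB sC by auto
  qed
  have edges: "g ` e \<in> EC \<and> \<sigma>C (g ` e) = switch \<sigma>B S e" if e: "e \<in> EB" for e
  proof -
    obtain u v where uv: "u \<in> VB" "v \<in> VB" "u \<noteq> v" "e = {u, v}"
      using sgB e unfolding signed_graph_def by blast
    have ge: "g ` e = {\<phi> (iv u), \<phi> (iv v)}" unfolding g_def uv(4) by simp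
    have ne: "iv u \<noteq> iv v" using ivr uv by metis
    show ?thesis
    proof (cases "iv u < iv v")
      case True
      then show ?thesis using K[OF True ivl[OF uv(2)]] e ge uv ivr by simp
    next
      case False
      then have lt: "iv v < iv u" using ne by simp
      have "e = {v, u}" using uv by auto
      then show ?thesis using K[OF lt ivl[OF uv(1)]] e ge uv ivr by (simp add: insert_commute)
    qed
  qed
  show ?thesis using inj img SV edges by blast
qed

lemma sg_prod:
  assumes sgA: "signed_graph VA EA \<sigma>A" and sgB: "signed_graph VB EB \<sigma>B"
  shows "signed_graph (cprod_V VA VB) (cprod_E VA EA VB EB) (cprod_sig \<sigma>A \<sigma>B)"
  unfolding signed_graph_def
proof (intro conjI ballI)
  fix e assume "e \<in> cprod_E VA EA VB EB"
  then consider (a) u v1 v2 where "e = {(u,v1),(u,v2)}" "u \<in> VA" "{v1,v2} \<in> EB"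
    | (b) u1 u2 v where "e = {(u1,v),(u2,v)}" "v \<in> VB" "{u1,u2} \<in> EA"
    unfolding cprod_E_def by blast
  then have "(\<exists>u v. u \<in> cprod_V VA VB \<and> v \<in> cprod_V VA VB \<and> u \<noteq> v \<and> e = {u, v}) \<and>
     (cprod_sig \<sigma>A \<sigma>B e = 1 \<or> cprod_sig \<sigma>A \<sigma>B e = - 1)"
  proof cases
    case a
    have "v1 \<noteq> v2 \<and> v1 \<in> VB \<and> v2 \<in> VB" using sg_edge_neq[OF sgB a(3)] .
    moreover have "cprod_sig \<sigma>A \<sigma>B e = \<sigma>B {v1,v2}" unfolding a(1) by (rule cprod_sig1)
    ultimately show ?thesis using a sg_sign[OF sgB a(3)] unfolding cprod_V_def by auto
  next
    case b
    have ne: "u1 \<noteq> u2 \<and> u1 \<in> VA \<and> u2 \<in> VA" using sg_edge_neq[OF sgA b(3)] .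
    moreover have "cprod_sig \<sigma>A \<sigma>B e = \<sigma>A {u1,u2}" unfolding b(1) using ne by (intro cprod_sig2) auto
    ultimately show ?thesis using b sg_sign[OF sgA b(3)] unfolding cprod_V_def by auto
  qed
  then show "\<exists>u v. u \<in> cprod_V VA VB \<and> v \<in> cprod_V VA VB \<and> u \<noteq> v \<and> e = {u, v}"
    "cprod_sig \<sigma>A \<sigma>B e = 1 \<or> cprod_sig \<sigma>A \<sigma>B e = - 1" by blast+
qed

lemma sg_fin_E: "signed_graph V E \<sigma> \<Longrightarrow> finite V \<Longrightarrow> finite E"
  unfolding signed_graph_def by (rule finite_subset[of _ "Pow V"]) auto

theorem theorem4p11:
  fixes VA :: "'a set" and EA :: "'a set set" and \<pi>A :: "'a set \<Rightarrow> int"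
    and VB :: "'b set" and EB :: "'b set set" and \<pi>B :: "'b set \<Rightarrow> int"
    and VC :: "'c set" and EC :: "'c set set" and \<pi>C :: "'c set \<Rightarrow> int"
  assumes "signed_graph VA EA \<pi>A" and "finite VA" and "VA \<noteq> {}"
    and "signed_graph VB EB \<pi>B" and "finite VB"
    and "signed_graph VC EC \<pi>C" and "finite VC"
    and "sg_equiv (cprod_V VA VB) (cprod_E VA EA VB EB) (cprod_sig \<pi>A \<pi>B)
                  (cprod_V VA VC) (cprod_E VA EA VC EC) (cprod_sig \<pi>A \<pi>C)"
  shows "sg_equiv VB EB \<pi>B VC EC \<pi>C"
proof -
  note sgA = assms(1) and fA = assms(2) and sgB = assms(4) and fB = assms(5) and sgC = assms(6) and fC = assms(7)
  obtain v0 where v0: "v0 \<in> VA" using assms(3) by blast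
  have sgAB: "signed_graph (cprod_V VA VB) (cprod_E VA EA VB EB) (cprod_sig \<pi>A \<pi>B)" by (rule sg_prod[OF sgA sgB])
  have sgAC: "signed_graph (cprod_V VA VC) (cprod_E VA EA VC EC) (cprod_sig \<pi>A \<pi>C)" by (rule sg_prod[OF sgA sgC])
  have H: "cnt VB EB \<pi>B n I ea eb Q D M N = cnt VC EC \<pi>C n I ea eb Q D M N"
    if "finite I" "wfe n I ea eb" "wfp n Q" "wfp n D" "finite D" "M \<subseteq> I" for n I ea eb Q D M N
  proof -
    have H0: "cnt VB EB \<pi>B n I ea eb Q' {} M' N' = cnt VC EC \<pi>C n I ea eb Q' {} M' N'"
      if "wfp n Q'" "M' \<subseteq> I" for Q' M' N'
    proof (rule cancel_counts[OF sgA sgB sgC fA fB fC v0 \<open>wfe n I ea eb\<close> that(1) \<open>finite I\<close> _ that(2)])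
      fix M N assume "M \<subseteq> I"
      show "cnt (cprod_V VA VB) (cprod_E VA EA VB EB) (cprod_sig \<pi>A \<pi>B) n I ea eb Q' {} M N =
            cnt (cprod_V VA VC) (cprod_E VA EA VC EC) (cprod_sig \<pi>A \<pi>C) n I ea eb Q' {} M N"
        by (rule cnt_equiv[OF sgAB sgAC assms(8) \<open>wfe n I ea eb\<close> that(1)]) (simp add: wfp_def)
    qed
    show ?thesis using allD[OF H0 \<open>finite D\<close> \<open>wfp n D\<close>] that by blast
  qed
  obtain g S where g: "inj_on g VB" "g ` VB \<subseteq> VC" "S \<subseteq> VB"
    and ge: "\<forall>e\<in>EB. g ` e \<in> EC \<and> \<pi>C (g ` e) = switch \<pi>B S e"
    using embed[OF sgB sgC fB fC H] by blast
  obtain g' S' where g': "inj_on g' VC" "g' ` VC \<subseteq> VB"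
    and ge': "\<forall>e\<in>EC. g' ` e \<in> EB"
    using embed[OF sgC sgB fC fB H[symmetric]] by blast
  have c1: "card VB \<le> card VC" using card_inj_on_le[OF g(1,2) fC] .
  have c2: "card VC \<le> card VB" using card_inj_on_le[OF g'(1,2) fB] .
  have "card (g ` VB) = card VC" using card_image[OF g(1)] c1 c2 by simp
  then have gV: "g ` VB = VC" by (rule card_subset_eq[OF fC g(2)])
  have bij: "bij_betw g VB VC" using g(1) gV by (simp add: bij_betw_def)
  have fEB: "finite EB" by (rule sg_fin_E[OF sgB fB])
  have fEC: "finite EC" by (rule sg_fin_E[OF sgC fC])
  have sub: "\<Union>E \<subseteq> V" if sg: "signed_graph V E \<sigma>" for V :: "'x set" and E \<sigma>
  proof
    fix w assume "w \<in> \<Union>E"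
    then obtain e where e: "e \<in> E" "w \<in> e" by blast
    then obtain u v where "u \<in> V" "v \<in> V" "e = {u, v}" using sg unfolding signed_graph_def by blast
    then show "w \<in> V" using e by auto
  qed
  have EBV: "\<Union>EB \<subseteq> VB" by (rule sub[OF sgB])
  have ECV: "\<Union>EC \<subseteq> VC" by (rule sub[OF sgC])
  have injE: "inj_on ((`) g) EB" by (rule inj_on_image, rule inj_on_subset[OF g(1) EBV])
  have injE': "inj_on ((`) g') EC" by (rule inj_on_image, rule inj_on_subset[OF g'(1) ECV])
  have imE: "(`) g ` EB \<subseteq> EC" using ge by blast
  have imE': "(`) g' ` EC \<subseteq> EB" using ge' by blast
  have d1: "card EB \<le> card EC" using card_inj_on_le[OF injE imE fEC] .
  have d2: "card EC \<le> card EB" using card_inj_on_le[OF injE' imE' fEB] .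
  have "card ((`) g ` EB) = card EC" using card_image[OF injE] d1 d2 by simp
  then have gE: "(`) g ` EB = EC" by (rule card_subset_eq[OF fEC imE])
  have injP: "inj_on ((`) g) (Pow VB)" by (rule inj_on_image) (use g(1) in simp)
  have iso: "\<forall>u\<in>VB. \<forall>v\<in>VB. {u, v} \<in> EB \<longleftrightarrow> {g u, g v} \<in> EC"
  proof (intro ballI iffI)
    fix u v assume "u \<in> VB" "v \<in> VB" "{u, v} \<in> EB"
    then have "g ` {u, v} \<in> EC" using ge by blast
    then show "{g u, g v} \<in> EC" by simp
  next
    fix u v assume uv: "u \<in> VB" "v \<in> VB" and "{g u, g v} \<in> EC"
    then have "g ` {u, v} \<in> (`) g ` EB" using gE by simp
    then obtain e where e: "e \<in> EB" "g ` e = g ` {u, v}" by (auto simp del: image_insert image_empty)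
    have "e \<in> Pow VB" using e(1) EBV by blast
    moreover have "{u, v} \<in> Pow VB" using uv by simp
    ultimately have "e = {u, v}" using injP e(2) by (meson inj_onD)
    then show "{u, v} \<in> EB" using e(1) by simp
  qed
  show ?thesis unfolding sg_equiv_def using bij iso g(3) ge by blast
qed

end
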